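(* Let $L$ be a Lie algebra over a field $k$ generated by its pure extremal elements, let $x,y\in E$ with $g(x,y)=1$ and let $L=\bigoplus_{i=-2}^2L_i$ be the associated $5$-grading. Let $\varphi=\exp(y)\exp(x)\exp(y)$. Then $\varphi(x)=y$, $\varphi(y)=x$, $\varphi(l_{-1})=[y,l_{-1}]$, $\varphi(l_0)=l_0+[x,[y,l_0]]$ and $\varphi(l_1)=[x,l_1]$ for all $l_{-1}\in L_{-1}$, $l_0\in L_0$, $l_1\in L_1$.
   Context: A nonzero $a\in L$ is extremal if there is $g_a\colon L\to k$ with $[a,[a,u]]=2g_a(u)a$, $[[a,u],[a,w]]=g_a([u,w])a+g_a(w)[a,u]-g_a(u)[a,w]$, $[a,[u,[a,w]]]=g_a([u,w])a-g_a(w)[a,u]-g_a(u)[a,w]$ for all $u,w$; sandwiches satisfy $[a,[a,u]]=0=[a,[u,[a,w]]]$ (and then $g_a=0$ by convention); pure = non-sandwich; $E$ = set of extremal elements; $g$ = unique symmetric bilinear form with $g(a,u)=g_a(u)$ for $a\in E$. $\exp(a)(u)=u+[a,u]+g_a(u)a$. The $5$-grading associated with $x,y$: $L_{-2}=kx$, $L_{-1}=[x,U]$, $L_0=\{l:[x,l]\in kx,[y,l]\in ky\}$, $L_1=[y,U]$, $L_2=ky$, $U=\{u:g(u,x)=g(u,y)=g(u,[x,y])=0\}$. *)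

theory Defs
  imports Main "HOL.Vector_Spaces"
begin

definition lie_algebra :: "('k::field \<Rightarrow> 'l::ab_group_add \<Rightarrow> 'l) \<Rightarrow> ('l \<Rightarrow> 'l \<Rightarrow> 'l) \<Rightarrow> bool" where
  "lie_algebra sc br \<longleftrightarrow>
     vector_space sc \<and>
     (\<forall>x. Vector_Spaces.linear sc sc (br x)) \<and>
     (\<forall>y. Vector_Spaces.linear sc sc (\<lambda>x. br x y)) \<and>
     (\<forall>x. br x x = 0) \<and>
     (\<forall>x y z. br x (br y z) + br y (br z x) + br z (br x y) = 0)"

definition extremal_form :: "('k::field \<Rightarrow> 'l::ab_group_add \<Rightarrow> 'l) \<Rightarrow> ('l \<Rightarrow> 'l \<Rightarrow> 'l) \<Rightarrow> 'l \<Rightarrow> ('l \<Rightarrow> 'k) \<Rightarrow> bool" where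
  "extremal_form sc br a f \<longleftrightarrow>
     (\<forall>u w.
        br a (br a u) = sc (2 * f u) a \<and>
        br (br a u) (br a w) = sc (f (br u w)) a + sc (f w) (br a u) - sc (f u) (br a w) \<and>
        br a (br u (br a w)) = sc (f (br u w)) a - sc (f w) (br a u) - sc (f u) (br a w))"

definition extremal :: "('k::field \<Rightarrow> 'l::ab_group_add \<Rightarrow> 'l) \<Rightarrow> ('l \<Rightarrow> 'l \<Rightarrow> 'l) \<Rightarrow> 'l \<Rightarrow> bool" where
  "extremal sc br a \<longleftrightarrow> a \<noteq> 0 \<and> (\<exists>f. extremal_form sc br a f)"

definition extremal_set :: "('k::field \<Rightarrow> 'l::ab_group_add \<Rightarrow> 'l) \<Rightarrow> ('l \<Rightarrow> 'l \<Rightarrow> 'l) \<Rightarrow> 'l set" where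
  "extremal_set sc br = {a. extremal sc br a}"

definition sandwich :: "('l::ab_group_add \<Rightarrow> 'l \<Rightarrow> 'l) \<Rightarrow> 'l \<Rightarrow> bool" where
  "sandwich br a \<longleftrightarrow> (\<forall>u w. br a (br a u) = 0 \<and> br a (br u (br a w)) = 0)"

definition pure_extremal :: "('k::field \<Rightarrow> 'l::ab_group_add \<Rightarrow> 'l) \<Rightarrow> ('l \<Rightarrow> 'l \<Rightarrow> 'l) \<Rightarrow> 'l \<Rightarrow> bool" where
  "pure_extremal sc br a \<longleftrightarrow> extremal sc br a \<and> \<not> sandwich br a"

inductive_set lie_generated :: "('k::field \<Rightarrow> 'l::ab_group_add \<Rightarrow> 'l) \<Rightarrow> ('l \<Rightarrow> 'l \<Rightarrow> 'l) \<Rightarrow> 'l set \<Rightarrow> 'l set"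
  for sc br S where
    gen: "a \<in> S \<Longrightarrow> a \<in> lie_generated sc br S"
  | zero: "0 \<in> lie_generated sc br S"
  | add: "a \<in> lie_generated sc br S \<Longrightarrow> b \<in> lie_generated sc br S \<Longrightarrow> a + b \<in> lie_generated sc br S"
  | scale: "a \<in> lie_generated sc br S \<Longrightarrow> sc c a \<in> lie_generated sc br S"
  | bracket: "a \<in> lie_generated sc br S \<Longrightarrow> b \<in> lie_generated sc br S \<Longrightarrow> br a b \<in> lie_generated sc br S"

definition extremal_bilinear_form :: "('k::field \<Rightarrow> 'l::ab_group_add \<Rightarrow> 'l) \<Rightarrow> ('l \<Rightarrow> 'l \<Rightarrow> 'l) \<Rightarrow> ('l \<Rightarrow> 'l \<Rightarrow> 'k) \<Rightarrow> bool" where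
  "extremal_bilinear_form sc br g \<longleftrightarrow>
     (\<forall>a. Vector_Spaces.linear sc (*) (g a)) \<and>
     (\<forall>a b. g a b = g b a) \<and>
     (\<forall>a. extremal sc br a \<longrightarrow> extremal_form sc br a (g a) \<and> (sandwich br a \<longrightarrow> (\<forall>u. g a u = 0)))"

definition lie_exp :: "('k::field \<Rightarrow> 'l::ab_group_add \<Rightarrow> 'l) \<Rightarrow> ('l \<Rightarrow> 'l \<Rightarrow> 'l) \<Rightarrow> ('l \<Rightarrow> 'l \<Rightarrow> 'k) \<Rightarrow> 'l \<Rightarrow> 'l \<Rightarrow> 'l" where
  "lie_exp sc br g a u = u + br a u + sc (g a u) a"

definition grade_U :: "('l::ab_group_add \<Rightarrow> 'l \<Rightarrow> 'l) \<Rightarrow> ('l \<Rightarrow> 'l \<Rightarrow> 'k::field) \<Rightarrow> 'l \<Rightarrow> 'l \<Rightarrow> 'l set" where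
  "grade_U br g x y = {u. g u x = 0 \<and> g u y = 0 \<and> g u (br x y) = 0}"

definition grade_m1 :: "('l::ab_group_add \<Rightarrow> 'l \<Rightarrow> 'l) \<Rightarrow> ('l \<Rightarrow> 'l \<Rightarrow> 'k::field) \<Rightarrow> 'l \<Rightarrow> 'l \<Rightarrow> 'l set" where
  "grade_m1 br g x y = br x ` grade_U br g x y"

definition grade_0 :: "('k::field \<Rightarrow> 'l::ab_group_add \<Rightarrow> 'l) \<Rightarrow> ('l \<Rightarrow> 'l \<Rightarrow> 'l) \<Rightarrow> 'l \<Rightarrow> 'l \<Rightarrow> 'l set" where
  "grade_0 sc br x y = {l. br x l \<in> range (\<lambda>c. sc c x) \<and> br y l \<in> range (\<lambda>c. sc c y)}"

definition grade_1 :: "('l::ab_group_add \<Rightarrow> 'l \<Rightarrow> 'l) \<Rightarrow> ('l \<Rightarrow> 'l \<Rightarrow> 'k::field) \<Rightarrow> 'l \<Rightarrow> 'l \<Rightarrow> 'l set" where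
  "grade_1 br g x y = br y ` grade_U br g x y"

end

theory Submission
  imports Defs
begin

locale LC =
  fixes sc :: "'k::field \<Rightarrow> 'l::ab_group_add \<Rightarrow> 'l" and br :: "'l \<Rightarrow> 'l \<Rightarrow> 'l"
    and g :: "'l \<Rightarrow> 'l \<Rightarrow> 'k"
  assumes LA: "lie_algebra sc br" and EB: "extremal_bilinear_form sc br g"
begin

sublocale vector_space sc using LA by (simp add: lie_algebra_def)

lemma mhR: "module_hom sc sc (br a)"
  using LA by (simp add: lie_algebra_def linear_iff_module_hom)
lemma mhL: "module_hom sc sc (\<lambda>x. br x b)"
  using LA by (simp add: lie_algebra_def linear_iff_module_hom)
lemma mhG: "module_hom sc (*) (g a)"
  using EB by (simp add: extremal_bilinear_form_def linear_iff_module_hom)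

lemma br_addR[simp]: "br a (u+v) = br a u + br a v" using module_hom.add[OF mhR] .
lemma br_scR[simp]: "br a (sc c u) = sc c (br a u)" using module_hom.scale[OF mhR] .
lemma br_diffR[simp]: "br a (u-v) = br a u - br a v" using module_hom.diff[OF mhR] .
lemma br_negR[simp]: "br a (-u) = - br a u" using module_hom.neg[OF mhR] .
lemma br_0R[simp]: "br a 0 = 0" using module_hom.zero[OF mhR] .
lemma br_addL[simp]: "br (u+v) b = br u b + br v b" using module_hom.add[OF mhL] .
lemma br_scL[simp]: "br (sc c u) b = sc c (br u b)" using module_hom.scale[OF mhL] .
lemma br_diffL[simp]: "br (u-v) b = br u b - br v b" using module_hom.diff[OF mhL] .
lemma br_negL[simp]: "br (-u) b = - br u b" using module_hom.neg[OF mhL] .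
lemma br_0L[simp]: "br 0 b = 0" using module_hom.zero[OF mhL, of b] by simp
lemma br_self[simp]: "br a a = 0" using LA by (simp add: lie_algebra_def)
lemma g_addR[simp]: "g a (u+v) = g a u + g a v" using module_hom.add[OF mhG] .
lemma g_scR[simp]: "g a (sc c u) = c * g a u" using module_hom.scale[OF mhG] .
lemma g_diffR[simp]: "g a (u-v) = g a u - g a v" using module_hom.diff[OF mhG] .
lemma g_negR[simp]: "g a (-u) = - g a u" using module_hom.neg[OF mhG] .
lemma g_0R[simp]: "g a 0 = 0" using module_hom.zero[OF mhG] .
lemma g_sym: "g a b = g b a" using EB by (simp add: extremal_bilinear_form_def)

lemma anti: "br a b = - br b a"
proof -
  have "(0::'l) = br (a+b) (a+b)" by simp
  also have "\<dots> = br a a + br a b + (br b a + br b b)" by (simp only: br_addL br_addR, simp add: add_ac)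
  also have "\<dots> = br a b + br b a" by simp
  finally have "br a b + br b a = 0" by simp
  then show ?thesis by (simp add: eq_neg_iff_add_eq_0)
qed

lemma jac: "br u (br a v) + br (br a u) v = br a (br u v)"
proof -
  have "br a (br u v) + br u (br v a) + br v (br a u) = 0" using LA by (simp add: lie_algebra_def)
  moreover have "br u (br v a) = - br u (br a v)" by (subst anti, simp)
  moreover have "br v (br a u) = - br (br a u) v" by (subst anti, simp)
  ultimately show ?thesis by (simp add: algebra_simps)
qed

lemma sc2: "sc 2 v = v + v"
  using scale_left_distrib[of 1 1 v] by simp
lemma sc2m: "sc (2 * c) v = sc c v + sc c v"
proof -
  have "sc (c + c) v = sc c v + sc c v" by (rule scale_left_distrib)
  then show ?thesis by (simp only: mult_2)
qed

abbreviation Ex where "Ex a \<equiv> lie_exp sc br g a"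
definition Ei where "Ei a v = v - br a v + sc (g a v) a"

lemma id1: "extremal_form sc br a h \<Longrightarrow> br a (br a u) = sc (2 * h u) a"
  by (simp add: extremal_form_def)
lemma id2: "extremal_form sc br a h \<Longrightarrow> br (br a u) (br a w) = sc (h (br u w)) a + sc (h w) (br a u) - sc (h u) (br a w)"
  by (simp add: extremal_form_def)
lemma id3: "extremal_form sc br a h \<Longrightarrow> br a (br u (br a w)) = sc (h (br u w)) a - sc (h w) (br a u) - sc (h u) (br a w)"
  by (simp add: extremal_form_def)

lemma EF: "extremal sc br a \<Longrightarrow> extremal_form sc br a (g a)"
  using EB by (simp add: extremal_bilinear_form_def)

lemma sandI: assumes "\<And>w. \<exists>c. br a w = sc c a" shows "sandwich br a"
  unfolding sandwich_def
proof (intro allI conjI)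
  fix u w
  obtain c1 where c1: "br a u = sc c1 a" using assms by blast
  obtain c2 where c2: "br a w = sc c2 a" using assms by blast
  show "br a (br a u) = 0" by (simp add: c1)
  have "br u (br a w) = - sc c2 (br a u)" by (simp add: c2, subst anti, simp)
  then show "br a (br u (br a w)) = 0" by (simp add: c1)
qed

lemma nsand: assumes "extremal sc br a" "g a b = 1" shows "\<not> sandwich br a"
  using EB assms by (auto simp: extremal_bilinear_form_def)

lemma gaa_aux: assumes "extremal sc br a" shows "sc (g a a) (br a w) = sc (g a (br a w)) a"
  using id2[OF EF[OF assms], of a w] by (simp add: algebra_simps)

lemma gaa: assumes "extremal sc br a" "\<not> sandwich br a" shows "g a a = 0"
proof (rule ccontr)
  assume ne: "g a a \<noteq> 0"
  have "\<exists>c. br a w = sc c a" for w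
  proof
    have "sc (inverse (g a a)) (sc (g a a) (br a w)) = br a w" using ne by simp
    then show "br a w = sc (inverse (g a a) * g a (br a w)) a"
      using gaa_aux[OF assms(1), of w] by simp
  qed
  then show False using sandI assms(2) by blast
qed

lemma gaaw: assumes "extremal sc br a" "\<not> sandwich br a" shows "g a (br a w) = 0"
proof -
  have "a \<noteq> 0" using assms(1) by (simp add: extremal_def)
  moreover have "sc (g a (br a w)) a = 0" using gaa_aux[OF assms(1), of w] gaa[OF assms] by simp
  ultimately show ?thesis by simp
qed

lemma brne: assumes "extremal sc br a" "g a b = 1" shows "br a b \<noteq> 0"
proof
  assume z: "br a b = 0"
  have "\<exists>c. br a w = sc c a" for w
  proof
    show "br a w = sc (g a (br w b)) a"
      using id3[OF EF[OF assms(1)], of w b] z assms(2) by (simp add: algebra_simps)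
  qed
  then show False using sandI nsand[OF assms] by blast
qed

lemma indep:
  assumes "extremal sc br a" "extremal sc br b" "g a b = 1"
    and "sc p a + sc q b + sc r (br a b) = 0"
  shows "p = 0 \<and> q = 0 \<and> r = 0"
proof -
  have gba: "g b a = 1" using assms(3) g_sym by metis
  have na: "\<not> sandwich br a" using nsand assms by blast
  have nb: "\<not> sandwich br b" using nsand assms(2) gba by blast
  have "g a (sc p a + sc q b + sc r (br a b)) = q"
    using gaa[OF assms(1) na] gaaw[OF assms(1) na] assms(3) by simp
  then have q: "q = 0" using assms(4) by simp
  have "br a b = - br b a" by (rule anti)
  then have "g b (br a b) = 0" using gaaw[OF assms(2) nb] by simp
  then have "g b (sc p a + sc q b + sc r (br a b)) = p"
    using gaa[OF assms(2) nb] gba by simp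
  then have p: "p = 0" using assms(4) by simp
  have "sc r (br a b) = 0" using assms(4) p q by simp
  then have "r = 0" using brne[OF assms(1,3)] by simp
  with p q show ?thesis by simp
qed

lemma E_add[simp]: "Ex a (u + v) = Ex a u + Ex a v"
  by (simp add: lie_exp_def algebra_simps)
lemma E_sc[simp]: "Ex a (sc c u) = sc c (Ex a u)"
  by (simp add: lie_exp_def algebra_simps)
lemma E_diff[simp]: "Ex a (u - v) = Ex a u - Ex a v"
  by (simp add: lie_exp_def algebra_simps)
lemma E_neg[simp]: "Ex a (- u) = - Ex a u"
  by (simp add: lie_exp_def algebra_simps)
lemma E_0[simp]: "Ex a 0 = 0"
  by (simp add: lie_exp_def algebra_simps)

lemma E_hom: assumes "extremal sc br a"
  shows "Ex a (br u v) = br (Ex a u) (Ex a v)"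
proof -
  have F: "extremal_form sc br a (g a)" using EF assms .
  have 1: "br (br a u) (br a v) = sc (g a (br u v)) a + sc (g a v) (br a u) - sc (g a u) (br a v)"
    using id2[OF F] .
  have 2: "br a (br a v) = sc (2 * g a v) a" "br a (br a u) = sc (2 * g a u) a"
    using id1[OF F] by auto
  have 3: "br (br a u) a = - sc (2 * g a u) a" by (subst anti) (simp add: 2)
  have 4: "br u a = - br a u" by (rule anti)
  have J: "br u (br a v) = br a (br u v) - br (br a u) v" using jac[of u a v] by (simp add: algebra_simps)
  show ?thesis unfolding lie_exp_def by (simp add: 1 2 3 4 J algebra_simps)
qed

lemma Einv1: assumes "extremal sc br a" "\<not> sandwich br a" shows "Ei a (Ex a v) = v"
  using gaa[OF assms] gaaw[OF assms] id1[OF EF[OF assms(1)], of v]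
  by (simp add: lie_exp_def Ei_def algebra_simps sc2m)

lemma Einv2: assumes "extremal sc br a" "\<not> sandwich br a" shows "Ex a (Ei a v) = v"
  using gaa[OF assms] gaaw[OF assms] id1[OF EF[OF assms(1)], of v]
  by (simp add: lie_exp_def Ei_def algebra_simps sc2m)

lemma Ei_0[simp]: "Ei a 0 = 0" by (simp add: Ei_def)

lemma key:
  assumes ea: "extremal sc br a" and eb: "extremal sc br b" and gab: "g a b = 1"
  shows "g u (br a b) = - g b (br a u)"
proof -
  have gba: "g b a = 1" using gab g_sym by metis
  have na: "\<not> sandwich br a" using nsand ea gab by blast
  have nb: "\<not> sandwich br b" using nsand eb gba by blast
  define z where "z = Ex a b"
  define f where "f = (\<lambda>v. g b (Ei a v))"
  have zE: "z = b + br a b + a" using gab by (simp add: z_def lie_exp_def)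
  have Fb: "extremal_form sc br b (g b)" using EF eb .
  note hom = E_hom[OF ea]
  note inv1 = Einv1[OF ea na] and inv2 = Einv2[OF ea na]
  have fE: "f (Ex a v) = g b v" for v by (simp add: f_def inv1)
  have main: "br z (br z (Ex a u')) = sc (2 * f (Ex a u')) z \<and>
        br (br z (Ex a u')) (br z (Ex a w')) = sc (f (br (Ex a u') (Ex a w'))) z + sc (f (Ex a w')) (br z (Ex a u')) - sc (f (Ex a u')) (br z (Ex a w')) \<and>
        br z (br (Ex a u') (br z (Ex a w'))) = sc (f (br (Ex a u') (Ex a w'))) z - sc (f (Ex a w')) (br z (Ex a u')) - sc (f (Ex a u')) (br z (Ex a w'))"
    for u' w'
    using id1[OF Fb, of u'] id2[OF Fb, of u' w'] id3[OF Fb, of u' w']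
    by (simp add: z_def hom[symmetric] fE)
  have Fz: "extremal_form sc br z f"
    unfolding extremal_form_def
  proof (intro allI)
    fix u w
    show "br z (br z u) = sc (2 * f u) z \<and>
        br (br z u) (br z w) = sc (f (br u w)) z + sc (f w) (br z u) - sc (f u) (br z w) \<and>
        br z (br u (br z w)) = sc (f (br u w)) z - sc (f w) (br z u) - sc (f u) (br z w)"
      using main[of "Ei a u" "Ei a w"] by (simp add: inv2)
  qed
  have "b \<noteq> 0" using eb by (simp add: extremal_def)
  then have "z \<noteq> 0" using inv1[of b] by (auto simp: z_def)
  then have ez: "extremal sc br z" using Fz by (auto simp: extremal_def)
  have Fgz: "extremal_form sc br z (g z)" using EF ez .
  have gza: "g z a = 1" using gaa[OF ea na] gaaw[OF ea na] gab g_sym[of z a]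
    by (simp add: zE)
  have fa: "f a = 1" using gaa[OF ea na] gba by (simp add: f_def Ei_def)
  have gaab: "br a (br a b) = sc 2 a" using id1[OF EF[OF ea], of b] gab by simp
  have zx: "br z a = - br a b - sc 2 a"
  proof -
    have "br (br a b) a = - br a (br a b)" by (rule anti)
    moreover have "br b a = - br a b" by (rule anti)
    ultimately show ?thesis by (simp add: zE gaab)
  qed
  have eq: "g z u = f u" for u
  proof (rule ccontr)
    assume ne: "g z u \<noteq> f u"
    have A: "br (br z u) (br z a) = sc (g z (br u a)) z + sc (g z a) (br z u) - sc (g z u) (br z a)"
      using id2[OF Fgz] .
    have B: "br (br z u) (br z a) = sc (f (br u a)) z + sc (f a) (br z u) - sc (f u) (br z a)"
      using id2[OF Fz] .
    have "sc (g z u - f u) (br z a) = sc (g z (br u a) - f (br u a)) z"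
      using A B gza fa by (simp add: algebra_simps)
    then have "sc (inverse (g z u - f u)) (sc (g z u - f u) (br z a)) = sc (inverse (g z u - f u)) (sc (g z (br u a) - f (br u a)) z)"
      by simp
    then obtain c where H: "br z a = sc c z" using ne by auto
    have H2: "- br a b - sc 2 a = sc c b + sc c (br a b) + sc c a" using H zx by (simp add: zE algebra_simps)
    have "sc (c+2) a + sc c b + sc (c+1) (br a b) = (sc c b + sc c (br a b) + sc c a) + (sc 2 a + br a b)"
      by (simp add: algebra_simps)
    also have "\<dots> = 0" unfolding H2[symmetric] by simp
    finally have "c + 2 = 0 \<and> c = 0 \<and> c + 1 = 0" using indep[OF ea eb gab] by blast
    then have "c = 0" "c + 1 = 0" by auto
    then show False by simp
  qed
  have "g u z = g b u - g b (br a u) + g a u * g b a"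
    using eq[of u] by (simp add: g_sym[of z] f_def Ei_def)
  moreover have "g u z = g u b + g u (br a b) + g u a" by (simp add: zE)
  moreover have "g u b = g b u" "g u a = g a u" by (rule g_sym)+
  ultimately have "g b (br a u) + g u (br a b) = 0"
    using gba by (simp add: algebra_simps)
  then show ?thesis by (simp add: add_eq_0_iff)
qed

lemma sc2m': "sc (c * 2) v = sc c v + sc c v"
  using sc2m[of c v] by (simp add: mult.commute)

lemma Eplain: "g a v = 0 \<Longrightarrow> Ex a v = v + br a v"
  by (simp add: lie_exp_def)

lemma Eaa: assumes "extremal sc br a" "\<not> sandwich br a" "g a u = 0"
  shows "Ex a (br a u) = br a u"
  using id1[OF EF[OF assms(1)], of u] gaaw[OF assms(1,2), of u] assms(3)
  by (simp add: lie_exp_def)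

lemma Eaba: assumes ea: "extremal sc br a" and na: "\<not> sandwich br a" and gab: "g a b = 1"
  and gau: "g a u = 0" and gabu: "g a (br b u) = 0"
  shows "Ex a (br b (br a u)) = br b (br a u) - br a u"
proof -
  have F: "extremal_form sc br a (g a)" using EF ea .
  have aau: "br a (br a u) = 0" using id1[OF F, of u] gau by simp
  have 1: "br a (br b (br a u)) = - br a u"
    using id3[OF F, of b u] gau gabu gab by simp
  have "br (br a b) (br a (br a u)) = sc (g a (br b (br a u))) a + sc (g a (br a u)) (br a b) - sc (g a b) (br a (br a u))"
    using id2[OF F] .
  then have "sc (g a (br b (br a u))) a = 0" using aau gaaw[OF ea na, of u] by simp
  moreover have "a \<noteq> 0" using ea by (simp add: extremal_def)
  ultimately have 2: "g a (br b (br a u)) = 0" by simp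
  show ?thesis using 1 2 by (simp add: lie_exp_def)
qed

lemma mainLC:
  assumes ex: "extremal sc br x" and ey: "extremal sc br y" and gxy: "g x y = 1"
  defines "\<phi> \<equiv> Ex y \<circ> Ex x \<circ> Ex y"
  shows "\<phi> x = y \<and> \<phi> y = x
    \<and> (\<forall>l \<in> grade_m1 br g x y. \<phi> l = br y l)
    \<and> (\<forall>l \<in> grade_0 sc br x y. \<phi> l = l + br x (br y l))
    \<and> (\<forall>l \<in> grade_1 br g x y. \<phi> l = br x l)"
proof -
  have gyx: "g y x = 1" using gxy g_sym by metis
  have nx: "\<not> sandwich br x" using nsand ex gxy by blast
  have ny: "\<not> sandwich br y" using nsand ey gyx by blast
  note gxx = gaa[OF ex nx] and gyy = gaa[OF ey ny]
  note gxw = gaaw[OF ex nx] and gyw = gaaw[OF ey ny]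
  have Fx: "extremal_form sc br x (g x)" using EF ex .
  have Fy: "extremal_form sc br y (g y)" using EF ey .
  have byx: "br y x = - br x y" by (rule anti)
  have yyx: "br y (br y x) = sc 2 y" using id1[OF Fy, of x] gyx by simp
  have xxy: "br x (br x y) = sc 2 x" using id1[OF Fx, of y] gxy by simp
  have yxy0: "- br y (br x y) = sc 2 y" using yyx byx by simp
  then have yxy: "br y (br x y) = - sc 2 y" by (metis minus_minus)
  have gyxy: "g y (br x y) = 0" using gyw[of x] byx by simp
  have T1: "Ex x x = x" using gxx by (simp add: lie_exp_def)
  have T2: "Ex x y = y + br x y + x" using gxy by (simp add: lie_exp_def)
  have T3: "Ex y y = y" using gyy by (simp add: lie_exp_def)
  have T4: "Ex y x = x - br x y + y" using gyx byx by (simp add: lie_exp_def)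
  have T5: "Ex y (br x y) = br x y - sc 2 y" using yxy gyxy by (simp add: lie_exp_def)
  have T6: "Ex x (br x y) = br x y + sc 2 x" using xxy gxw[of y] by (simp add: lie_exp_def)
  have P1: "\<phi> x = y"
    by (simp add: \<phi>_def T1 T2 T3 T4 T5 T6 algebra_simps sc2)
  have P2: "\<phi> y = x"
    by (simp add: \<phi>_def T1 T2 T3 T4 T5 T6 algebra_simps sc2)
  have gam: "g y (br x u) = 0" and del: "g x (br y u) = 0" and gxu: "g x u = 0" and gyu: "g y u = 0"
    if "u \<in> grade_U br g x y" for u
  proof -
    from that have u: "g u x = 0" "g u y = 0" "g u (br x y) = 0" by (auto simp: grade_U_def)
    show "g y (br x u) = 0" using key[OF ex ey gxy, of u] u by simp
    have "g u (br y x) = 0" using u byx by simp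
    then show "g x (br y u) = 0" using key[OF ey ex gyx, of u] by simp
    show "g x u = 0" "g y u = 0" using u g_sym by metis+
  qed
  have P3: "\<forall>l \<in> grade_m1 br g x y. \<phi> l = br y l"
  proof
    fix l assume "l \<in> grade_m1 br g x y"
    then obtain u where uU: "u \<in> grade_U br g x y" and l: "l = br x u" by (auto simp: grade_m1_def)
    have a1: "Ex y (br x u) = br x u + br y (br x u)" using Eplain gam[OF uU] by blast
    have a2: "Ex x (br x u) = br x u" using Eaa[OF ex nx gxu[OF uU]] .
    have a3: "Ex x (br y (br x u)) = br y (br x u) - br x u" using Eaba[OF ex nx gxy gxu[OF uU] del[OF uU]] .
    have a4: "Ex y (br y (br x u)) = br y (br x u)" using Eaa[OF ey ny gam[OF uU]] .
    show "\<phi> l = br y l" by (simp add: \<phi>_def l a1 a2 a3 a4)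
  qed
  have P5: "\<forall>l \<in> grade_1 br g x y. \<phi> l = br x l"
  proof
    fix l assume "l \<in> grade_1 br g x y"
    then obtain u where uU: "u \<in> grade_U br g x y" and l: "l = br y u" by (auto simp: grade_1_def)
    have b1: "Ex y (br y u) = br y u" using Eaa[OF ey ny gyu[OF uU]] .
    have b2: "Ex x (br y u) = br y u + br x (br y u)" using Eplain del[OF uU] by blast
    have b3: "Ex y (br x (br y u)) = br x (br y u) - br y u" using Eaba[OF ey ny gyx gyu[OF uU] gam[OF uU]] .
    show "\<phi> l = br x l" by (simp add: \<phi>_def l b1 b2 b3)
  qed
  have P4: "\<forall>l \<in> grade_0 sc br x y. \<phi> l = l + br x (br y l)"
  proof
    fix l assume "l \<in> grade_0 sc br x y"
    then obtain \<alpha> \<beta> where al: "br x l = sc \<alpha> x" and be: "br y l = sc \<beta> y"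
      by (auto simp: grade_0_def)
    have E1: "- sc (\<beta> * 2) y = sc \<alpha> y + sc (g y l) (br x y) - sc \<beta> y"
      using id3[OF Fy, of x l] al be byx yxy gyx by simp
    have "sc 0 x + sc (\<alpha> + \<beta>) y + sc (g y l) (br x y) = (sc \<alpha> y + sc (g y l) (br x y) - sc \<beta> y) - (- sc (\<beta> * 2) y)"
      by (simp add: algebra_simps sc2m')
    also have "\<dots> = 0" using E1 by simp
    finally have "0 = (0::'k) \<and> \<alpha> + \<beta> = 0 \<and> g y l = 0" using indep[OF ex ey gxy] by blast
    then have gyl: "g y l = 0" by simp
    have xyx: "br x (br y x) = - sc 2 x" using xxy byx by simp
    have E2: "- sc (\<alpha> * 2) x = sc \<beta> x - sc (g x l) (br x y) - sc \<alpha> x"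
      using id3[OF Fx, of y l] al be xyx gxy by simp
    have "sc (\<alpha> + \<beta>) x + sc 0 y + sc (- g x l) (br x y) = (sc \<beta> x - sc (g x l) (br x y) - sc \<alpha> x) - (- sc (\<alpha> * 2) x)"
      by (simp add: algebra_simps sc2m')
    also have "\<dots> = 0" using E2 by simp
    finally have "\<alpha> + \<beta> = 0 \<and> 0 = (0::'k) \<and> - g x l = 0" using indep[OF ex ey gxy] by blast
    then have gxl: "g x l = 0" and ab: "\<alpha> = - \<beta>" by (auto simp: add_eq_0_iff2)
    have Ey: "Ex y l = l + sc \<beta> y" using gyl be by (simp add: lie_exp_def)
    have Exl: "Ex x l = l - sc \<beta> x" using gxl al ab by (simp add: lie_exp_def)
    show "\<phi> l = l + br x (br y l)"
      by (simp add: \<phi>_def Ey Exl be T1 T2 T3 T4 T5 T6 algebra_simps sc2)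
  qed
  show ?thesis using P1 P2 P3 P4 P5 by blast
qed

end
theorem lemma2p8:
  fixes sc :: "'k::field \<Rightarrow> 'l::ab_group_add \<Rightarrow> 'l"
    and br :: "'l \<Rightarrow> 'l \<Rightarrow> 'l"
    and g :: "'l \<Rightarrow> 'l \<Rightarrow> 'k"
    and x y :: 'l
  assumes "lie_algebra sc br"
    and "lie_generated sc br {a. pure_extremal sc br a} = UNIV"
    and "extremal_bilinear_form sc br g"
    and "x \<in> extremal_set sc br" and "y \<in> extremal_set sc br"
    and "g x y = 1"
  defines "\<phi> \<equiv> lie_exp sc br g y \<circ> lie_exp sc br g x \<circ> lie_exp sc br g y"
  shows "\<phi> x = y \<and> \<phi> y = x
    \<and> (\<forall>l \<in> grade_m1 br g x y. \<phi> l = br y l)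
    \<and> (\<forall>l \<in> grade_0 sc br x y. \<phi> l = l + br x (br y l))
    \<and> (\<forall>l \<in> grade_1 br g x y. \<phi> l = br x l)"
proof -
  interpret L: LC sc br g by (rule LC.intro[OF assms(1) assms(3)])
  have ex: "extremal sc br x" using assms(4) by (simp add: extremal_set_def)
  have ey: "extremal sc br y" using assms(5) by (simp add: extremal_set_def)
  show ?thesis unfolding \<phi>_def by (rule L.mainLC[OF ex ey assms(6)])
qed

end
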